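(* Let $\mathcal{C}$ be a graph class that is locally almost near-covered with respect to functions $k,m:\mathbb{N}\to\mathbb{N}$, and set $t:=m(2)\cdot k(2)+m(2)+1$. Then no graph in $\mathcal{C}$ contains a half-graph of order $t$ as a semi-induced subgraph.
   Context: $N^G(v)$ is the set of neighbors of $v$; $N_r^G(v)$ is the closed $r$-neighborhood of $v$ (vertices at distance at most $r$, including $v$). Two vertices are $k$-near-twins in $G$ if $|N^G(u)\,\Delta\,N^G(v)|\le k$. $G$ is $(k,m)$-near-covered if every set of vertices that are pairwise not $k$-near-twins has size at most $m$. $\mathcal{C}$ is locally almost near-covered with respect to $k,m$ if for every $r$, every $G\in\mathcal{C}$ and every $v\in V(G)$, the induced subgraph $G[N_r^G(v)]$ is $(k(r),m(r))$-near-covered. $G$ contains a half-graph of order $t$ as a semi-induced subgraph if there are distinct vertices $u_1,\dots,u_t,w_1,\dots,w_t$ of $G$ with $u_iw_j\in E(G)$ iff $i\le j$ (other edges arbitrary). *)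

theory Defs
  imports Main
begin

type_synonym 'a graph = "'a set \<times> ('a \<Rightarrow> 'a \<Rightarrow> bool)"

definition verts :: "'a graph \<Rightarrow> 'a set" where "verts G = fst G"
definition adj :: "'a graph \<Rightarrow> 'a \<Rightarrow> 'a \<Rightarrow> bool" where "adj G = snd G"

definition simple_graph :: "'a graph \<Rightarrow> bool" where
  "simple_graph G \<longleftrightarrow> finite (verts G)
     \<and> (\<forall>u v. adj G u v \<longrightarrow> u \<in> verts G \<and> v \<in> verts G)
     \<and> (\<forall>u v. adj G u v \<longrightarrow> adj G v u)
     \<and> (\<forall>u. \<not> adj G u u)"

definition neighbors :: "'a graph \<Rightarrow> 'a \<Rightarrow> 'a set" where
  "neighbors G v = {u \<in> verts G. adj G v u}"

fun ball :: "'a graph \<Rightarrow> 'a \<Rightarrow> nat \<Rightarrow> 'a set" where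
  "ball G v 0 = {v}"
| "ball G v (Suc r) = ball G v r \<union> {u \<in> verts G. \<exists>w \<in> ball G v r. adj G w u}"

definition induced :: "'a graph \<Rightarrow> 'a set \<Rightarrow> 'a graph" where
  "induced G S = (verts G \<inter> S, \<lambda>u v. adj G u v \<and> u \<in> S \<and> v \<in> S)"

definition near_twins :: "'a graph \<Rightarrow> nat \<Rightarrow> 'a \<Rightarrow> 'a \<Rightarrow> bool" where
  "near_twins G k u v \<longleftrightarrow>
     card ((neighbors G u - neighbors G v) \<union> (neighbors G v - neighbors G u)) \<le> k"

definition near_covered :: "nat \<Rightarrow> nat \<Rightarrow> 'a graph \<Rightarrow> bool" where
  "near_covered k m G \<longleftrightarrow>
     (\<forall>X \<subseteq> verts G. (\<forall>u\<in>X. \<forall>v\<in>X. u \<noteq> v \<longrightarrow> \<not> near_twins G k u v) \<longrightarrow> card X \<le> m)"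

definition locally_almost_near_covered ::
  "'a graph set \<Rightarrow> (nat \<Rightarrow> nat) \<Rightarrow> (nat \<Rightarrow> nat) \<Rightarrow> bool" where
  "locally_almost_near_covered C k m \<longleftrightarrow>
     (\<forall>r. \<forall>G\<in>C. \<forall>v\<in>verts G. near_covered (k r) (m r) (induced G (ball G v r)))"

definition has_semi_induced_half_graph :: "'a graph \<Rightarrow> nat \<Rightarrow> bool" where
  "has_semi_induced_half_graph G t \<longleftrightarrow>
     (\<exists>u w :: nat \<Rightarrow> 'a.
        inj_on u {1..t} \<and> inj_on w {1..t} \<and> u ` {1..t} \<inter> w ` {1..t} = {}
      \<and> u ` {1..t} \<subseteq> verts G \<and> w ` {1..t} \<subseteq> verts G
      \<and> (\<forall>i\<in>{1..t}. \<forall>j\<in>{1..t}. adj G (u i) (w j) \<longleftrightarrow> i \<le> j))"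

end

theory Submission
  imports Defs
begin

lemma ball_mono1: "ball G v r \<subseteq> ball G v (Suc r)"
  by auto

lemma verts_induced: "verts (induced G S) = verts G \<inter> S"
  by (simp add: verts_def induced_def)

lemma adj_induced: "adj (induced G S) x y = (adj G x y \<and> x \<in> S \<and> y \<in> S)"
  by (simp add: adj_def induced_def)

lemma neighbors_induced:
  "neighbors (induced G S) x = {y \<in> verts G \<inter> S. adj G x y \<and> x \<in> S \<and> y \<in> S}"
  by (simp add: neighbors_def verts_induced adj_induced)

theorem lemma5p12:
  fixes C :: "'a graph set" and k m :: "nat \<Rightarrow> nat"
  assumes "\<forall>G\<in>C. simple_graph G"
    and "locally_almost_near_covered C k m"
  shows "\<forall>G\<in>C. \<not> has_semi_induced_half_graph G (m 2 * k 2 + m 2 + 1)"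
proof (intro ballI notI)
  fix G assume GC: "G \<in> C" and hg: "has_semi_induced_half_graph G (m 2 * k 2 + m 2 + 1)"
  define K where "K = k 2"
  define M where "M = m 2"
  define t where "t = M * K + M + 1"
  have sg: "simple_graph G" using assms(1) GC by blast
  have fin: "finite (verts G)" and sym: "\<And>a b. adj G a b \<Longrightarrow> adj G b a"
    using sg unfolding simple_graph_def by auto
  have hg': "has_semi_induced_half_graph G t" using hg by (simp add: t_def K_def M_def)
  obtain u w :: "nat \<Rightarrow> 'a" where P:
    "inj_on u {1..t} \<and> inj_on w {1..t} \<and> u ` {1..t} \<inter> w ` {1..t} = {}
      \<and> u ` {1..t} \<subseteq> verts G \<and> w ` {1..t} \<subseteq> verts G
      \<and> (\<forall>i\<in>{1..t}. \<forall>j\<in>{1..t}. adj G (u i) (w j) \<longleftrightarrow> i \<le> j)"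
    using hg' unfolding has_semi_induced_half_graph_def by (elim exE) (erule that)
  have iu: "inj_on u {1..t}" using P by (rule conjunct1)
  have iw: "inj_on w {1..t}" using P by (elim conjE)
  have uv: "u ` {1..t} \<subseteq> verts G" using P by (elim conjE)
  have wv: "w ` {1..t} \<subseteq> verts G" using P by (elim conjE)
  have ad: "\<forall>i\<in>{1..t}. \<forall>j\<in>{1..t}. adj G (u i) (w j) \<longleftrightarrow> i \<le> j" using P by (elim conjE)
  have t1: "1 \<le> t" by (simp add: t_def)
  define v where "v = w t"
  have vV: "v \<in> verts G" using wv t1 by (auto simp: v_def)
  define B where "B = ball G v 2"
  have uB1: "u i \<in> ball G v 1" if "i \<in> {1..t}" for i
  proof -
    have "adj G (u i) (w t)" using ad that t1 by auto
    hence "adj G v (u i)" using sym by (simp add: v_def)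
    moreover have "u i \<in> verts G" using uv that by auto
    ultimately show ?thesis by (auto simp: v_def)
  qed
  have uB: "u i \<in> B" if "i \<in> {1..t}" for i
    using uB1[OF that] ball_mono1[of G v 1] by (auto simp: B_def numeral_2_eq_2)
  have wB: "w j \<in> B" if "j \<in> {1..t}" for j
  proof -
    have "adj G (u 1) (w j)" using ad that t1 by auto
    moreover have "u 1 \<in> ball G v 1" using uB1 t1 by auto
    moreover have "w j \<in> verts G" using wv that by auto
    ultimately show ?thesis unfolding B_def numeral_2_eq_2 by auto
  qed
  define H where "H = induced G B"
  have nc: "near_covered K M H"
    using assms(2) GC vV unfolding locally_almost_near_covered_def H_def B_def K_def M_def by blast
  have finN: "finite (neighbors H x)" for x
    using fin by (simp add: H_def neighbors_induced)
  have key: "\<not> near_twins H K (u i) (u i')"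
    if i: "i \<in> {1..t}" "i' \<in> {1..t}" "i + K < i'" for i i'
  proof
    assume nt: "near_twins H K (u i) (u i')"
    have sub: "w ` {i..<i'} \<subseteq> neighbors H (u i) - neighbors H (u i')"
    proof
      fix y assume "y \<in> w ` {i..<i'}"
      then obtain j where j: "j \<in> {i..<i'}" "y = w j" by auto
      have jt: "j \<in> {1..t}" using j i by auto
      have "adj G (u i) (w j)" using ad i jt j by auto
      moreover have "\<not> adj G (u i') (w j)" using ad i jt j by auto
      ultimately show "y \<in> neighbors H (u i) - neighbors H (u i')"
        using j wB[OF jt] uB[OF i(1)] wv jt
        by (auto simp: H_def neighbors_induced)
    qed
    have sb: "{i..<i'} \<subseteq> {1..t}" using i by auto
    have cw: "card (w ` {i..<i'}) = i' - i"
      using card_image[OF inj_on_subset[OF iw sb]] by simp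
    also have "\<dots> \<le> card (neighbors H (u i) - neighbors H (u i'))"
      using sub finN by (metis calculation card_mono finite_Diff)
    also have "\<dots> \<le> card ((neighbors H (u i) - neighbors H (u i')) \<union> (neighbors H (u i') - neighbors H (u i)))"
      using finN by (intro card_mono) auto
    also have "\<dots> \<le> K" using nt unfolding near_twins_def .
    finally show False using i cw by simp
  qed
  have ntsym: "near_twins H K a b = near_twins H K b a" for a b
    unfolding near_twins_def by (simp add: Un_commute)
  define f where "f s = u (1 + s * (K + 1))" for s
  have idx: "1 + s * (K + 1) \<in> {1..t}" if "s \<le> M" for s
  proof -
    have "s * (K + 1) \<le> M * (K + 1)" using that by (rule mult_right_mono) simp
    thus ?thesis by (simp add: t_def algebra_simps)
  qed
  have finj: "inj_on f {0..M}"
  proof (rule inj_onI)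
    fix s s' assume a: "s \<in> {0..M}" "s' \<in> {0..M}" "f s = f s'"
    have "s \<le> M" "s' \<le> M" using a by auto
    hence "1 + s * (K + 1) = 1 + s' * (K + 1)"
      using inj_onD[OF iu a(3)[unfolded f_def] idx idx] by blast
    hence "s * (K + 1) = s' * (K + 1)" by simp
    thus "s = s'" by (metis mult_right_cancel add_gr_0 zero_less_one less_not_refl)
  qed
  define X where "X = f ` {0..M}"
  have XV: "X \<subseteq> verts H"
    using uv uB idx by (auto simp: X_def f_def H_def verts_induced)
  have gap: "1 + s * (K + 1) + K < 1 + s' * (K + 1)" if "s < s'" for s s'
  proof -
    have "(s + 1) * (K + 1) \<le> s' * (K + 1)" using that by (intro mult_right_mono) auto
    thus ?thesis by (simp add: algebra_simps)
  qed
  have pw: "\<forall>a\<in>X. \<forall>b\<in>X. a \<noteq> b \<longrightarrow> \<not> near_twins H K a b"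
  proof (intro ballI impI)
    fix a b assume "a \<in> X" "b \<in> X" "a \<noteq> b"
    then obtain s s' where s: "s \<le> M" "s' \<le> M" "a = f s" "b = f s'" "s \<noteq> s'"
      unfolding X_def by (metis atLeastAtMost_iff imageE)
    show "\<not> near_twins H K a b"
    proof (cases "s < s'")
      case True
      thus ?thesis using key[OF idx[OF s(1)] idx[OF s(2)] gap[OF True]] s by (simp add: f_def)
    next
      case False
      hence "s' < s" using s by simp
      thus ?thesis using key[OF idx[OF s(2)] idx[OF s(1)] gap[of s' s]] s ntsym by (simp add: f_def)
    qed
  qed
  have "card X \<le> M" using nc XV pw unfolding near_covered_def by blast
  moreover have "card X = M + 1" using finj by (simp add: X_def card_image)
  ultimately show False by simp
qed

end
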